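(* For every integer $i\ge1$, $f(R_i)=i-1$.
   Context: Rooted binary trees $H_i$ are defined recursively: $H_1$ is a single vertex $r'_1$; for $i\ge2$, $H_i$ has root $r'_i$ with exactly two children: a leaf, and the root $r'_{i-1}$ of a copy of $H_{i-1}$. Rooted binary trees $R_i$ are defined recursively: $R_1$ is a single vertex $r_1$; for $i\ge2$, $R_i$ has root $r_i$ with exactly two children: the root $r_{i-1}$ of a copy of $R_{i-1}$ and the root $r'_{i-1}$ of a copy of $H_{i-1}$. For a rooted tree $T_r$, $h(T_r)$ is the number of vertices on a longest path in $T_r$ starting at $r$ ($h$ of a single vertex is $1$; the empty tree has $h=0$ and $f=0$), and $T_v$ is the subtree of descendants of $v$ rooted at $v$. The function $f$ is defined recursively: if $|V(T_r)|\le1$ then $f(T_r)=0$; otherwise let the children of $r$ be $v_1,\dots,v_k$ ordered so that $h(T_{v_1})\ge\dots\ge h(T_{v_k})$, appending an empty tree $T_{v_k}$ if needed so that $k$ is even; then $f(T_r)=\max\{\sum_{i=1}^k f(T_{v_i}),\ \sum_{i=1}^{k/2} h(T_{v_{2i}})\}$. *)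

theory Defs
  imports Main
begin

text \<open>Finite rooted trees: a node with a (finite) list of children. The order of
  the children list carries no meaning; the function fval below sorts children by height.\<close>
datatype rtree = Node "rtree list"

fun nverts :: "rtree \<Rightarrow> nat" where
  "nverts (Node cs) = Suc (sum_list (map nverts cs))"

fun ht :: "rtree \<Rightarrow> nat" where
  "ht (Node cs) = Suc (foldr max (map ht cs) 0)"

text \<open>Given heights sorted non-increasingly h_1 >= h_2 >= ..., the sum of h_2 + h_4 + ...
  (0-based odd positions). Padding by an empty tree (height 0) does not change it.\<close>
definition even_pos_sum :: "nat list \<Rightarrow> nat" where
  "even_pos_sum hs = sum_list (map (\<lambda>j. hs ! j) (filter odd [0..<length hs]))"

fun fval :: "rtree \<Rightarrow> nat" where
  "fval (Node cs) =
     (if nverts (Node cs) \<le> 1 then 0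
      else max (sum_list (map fval cs)) (even_pos_sum (rev (sort (map ht cs)))))"

fun Htree :: "nat \<Rightarrow> rtree" where
  "Htree 0 = Node []"
| "Htree (Suc 0) = Node []"
| "Htree (Suc (Suc n)) = Node [Node [], Htree (Suc n)]"

fun Rtree :: "nat \<Rightarrow> rtree" where
  "Rtree 0 = Node []"
| "Rtree (Suc 0) = Node []"
| "Rtree (Suc (Suc n)) = Node [Rtree (Suc n), Htree (Suc n)]"

end

theory Submission
  imports Defs
begin

lemma ht_H: "n \<ge> 1 \<Longrightarrow> ht (Htree n) = n"
  by (induction n rule: Htree.induct) auto

lemma ht_R: "n \<ge> 1 \<Longrightarrow> ht (Rtree n) = n"
  by (induction n rule: Rtree.induct) (auto simp: ht_H)

lemma nv_pos: "nverts t \<ge> 1"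
  by (cases t) auto

lemma eps2: "even_pos_sum [a, b] = b"
  by (simp add: even_pos_sum_def upt_rec)

lemma f_H: "fval (Htree n) \<le> 1"
proof (induction n rule: Htree.induct)
  case (3 n)
  have "ht (Htree (Suc n)) = Suc n" by (simp add: ht_H)
  then have s: "rev (sort (map ht [Node [], Htree (Suc n)])) = [Suc n, 1]"
    by simp
  have nv: "\<not> nverts (Htree (Suc (Suc n))) \<le> 1"
    using nv_pos[of "Htree (Suc n)"] by simp
  have "fval (Htree (Suc (Suc n))) = max (fval (Node []) + fval (Htree (Suc n))) 1"
    using nv by (simp only: Htree.simps fval.simps s eps2 if_False) simp
  then show ?case using 3 by simp
qed auto

theorem lemma4:
  fixes i :: nat
  assumes "i \<ge> 1"
  shows "fval (Rtree i) = i - 1"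
  using assms
proof (induction i rule: Rtree.induct)
  case (3 n)
  have s: "rev (sort (map ht [Rtree (Suc n), Htree (Suc n)])) = [Suc n, Suc n]"
    by (simp add: ht_H ht_R)
  have nv: "\<not> nverts (Rtree (Suc (Suc n))) \<le> 1"
    using nv_pos[of "Rtree (Suc n)"] nv_pos[of "Htree (Suc n)"] by simp
  have ih: "fval (Rtree (Suc n)) = n" using 3 by simp
  have "fval (Rtree (Suc (Suc n))) = max (fval (Rtree (Suc n)) + fval (Htree (Suc n))) (Suc n)"
    using nv by (simp only: Rtree.simps fval.simps s eps2 if_False) simp
  then show ?case using ih f_H[of "Suc n"] by simp
qed auto

end
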